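(* Let $\mathcal{C}$ be a category and $\mathcal{D}$ a cartesian closed category with internal hom $[-,-]$, and let $F,G,H:\mathcal{C}^{op}\times\mathcal{C}\to\mathcal{D}$ be functors. There is a bijection between dinatural transformations $F\times G\Rightarrow H$ (where $(F\times G)(x',x)=F(x',x)\times G(x',x)$) and dinatural transformations $G\Rightarrow E$, where $E:\mathcal{C}^{op}\times\mathcal{C}\to\mathcal{D}$ is $E(x',x):=[F(x,x'),H(x',x)]$.
   Context: For $F,G:\mathcal{C}^{op}\times\mathcal{C}\to\mathcal{D}$, a dinatural transformation is a family $\alpha_x:F(x,x)\to G(x,x)$ such that for every $f:a\to b$: $G(f,\mathrm{id}_b)\circ\alpha_b\circ F(\mathrm{id}_b,f)=G(\mathrm{id}_a,f)\circ\alpha_a\circ F(f,\mathrm{id}_a)$. *)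

theory Defs
  imports Main
begin

record ('o,'a) category =
  Ob :: "'o set"
  Ar :: "'a set"
  Dom :: "'a \<Rightarrow> 'o"
  Cod :: "'a \<Rightarrow> 'o"
  Idt :: "'o \<Rightarrow> 'a"
  Comp :: "'a \<Rightarrow> 'a \<Rightarrow> 'a"   (* Comp C g f = g \<circ> f *)

definition hom :: "('o,'a) category \<Rightarrow> 'o \<Rightarrow> 'o \<Rightarrow> 'a set" where
  "hom C x y = {f \<in> Ar C. Dom C f = x \<and> Cod C f = y}"

definition is_category :: "('o,'a) category \<Rightarrow> bool" where
  "is_category C \<longleftrightarrow>
     (\<forall>f\<in>Ar C. Dom C f \<in> Ob C \<and> Cod C f \<in> Ob C) \<and>
     (\<forall>x\<in>Ob C. Idt C x \<in> hom C x x) \<and>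
     (\<forall>f\<in>Ar C. \<forall>g\<in>Ar C. Cod C f = Dom C g \<longrightarrow>
          Comp C g f \<in> hom C (Dom C f) (Cod C g)) \<and>
     (\<forall>f\<in>Ar C. Comp C f (Idt C (Dom C f)) = f \<and> Comp C (Idt C (Cod C f)) f = f) \<and>
     (\<forall>f\<in>Ar C. \<forall>g\<in>Ar C. \<forall>h\<in>Ar C. Cod C f = Dom C g \<longrightarrow> Cod C g = Dom C h \<longrightarrow>
          Comp C h (Comp C g f) = Comp C (Comp C h g) f)"

text \<open>Object part BFo x' x = B(x',x); arrow part BFa f g = B(f,g) for
  f : a' \<rightarrow> b' (contravariant slot) and g : a \<rightarrow> b, a morphism B(b',a) \<rightarrow> B(a',b).\<close>

record ('o,'a,'p,'b) bifunctor =
  BFo :: "'o \<Rightarrow> 'o \<Rightarrow> 'p"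
  BFa :: "'a \<Rightarrow> 'a \<Rightarrow> 'b"

definition is_bifunctor ::
  "('o,'a) category \<Rightarrow> ('p,'b) category \<Rightarrow> ('o,'a,'p,'b) bifunctor \<Rightarrow> bool" where
  "is_bifunctor C D B \<longleftrightarrow>
     (\<forall>x'\<in>Ob C. \<forall>x\<in>Ob C. BFo B x' x \<in> Ob D) \<and>
     (\<forall>f\<in>Ar C. \<forall>g\<in>Ar C.
        BFa B f g \<in> hom D (BFo B (Cod C f) (Dom C g)) (BFo B (Dom C f) (Cod C g))) \<and>
     (\<forall>x'\<in>Ob C. \<forall>x\<in>Ob C. BFa B (Idt C x') (Idt C x) = Idt D (BFo B x' x)) \<and>
     (\<forall>f1\<in>Ar C. \<forall>f2\<in>Ar C. \<forall>g1\<in>Ar C. \<forall>g2\<in>Ar C.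
        Cod C f1 = Dom C f2 \<longrightarrow> Cod C g1 = Dom C g2 \<longrightarrow>
        BFa B (Comp C f2 f1) (Comp C g2 g1) = Comp D (BFa B f1 g2) (BFa B f2 g1))"

text \<open>prd x y = x \<times> y with projections pr1, pr2 and pairing; one = terminal object;
  ex y z = [y,z] with evaluation ev y z : [y,z] \<times> y \<rightarrow> z and currying
  lam x y z h : x \<rightarrow> [y,z] for h : x \<times> y \<rightarrow> z.\<close>

record ('p,'b) ccc_structure =
  prd :: "'p \<Rightarrow> 'p \<Rightarrow> 'p"
  pr1 :: "'p \<Rightarrow> 'p \<Rightarrow> 'b"
  pr2 :: "'p \<Rightarrow> 'p \<Rightarrow> 'b"
  pair :: "'b \<Rightarrow> 'b \<Rightarrow> 'b"
  one :: "'p"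
  bang :: "'p \<Rightarrow> 'b"
  ex :: "'p \<Rightarrow> 'p \<Rightarrow> 'p"
  ev :: "'p \<Rightarrow> 'p \<Rightarrow> 'b"
  lam :: "'p \<Rightarrow> 'p \<Rightarrow> 'p \<Rightarrow> 'b \<Rightarrow> 'b"

definition prod_arr :: "('p,'b) category \<Rightarrow> ('p,'b) ccc_structure \<Rightarrow> 'b \<Rightarrow> 'b \<Rightarrow> 'b" where
  "prod_arr D S f g =
     pair S (Comp D f (pr1 S (Dom D f) (Dom D g))) (Comp D g (pr2 S (Dom D f) (Dom D g)))"

definition is_ccc :: "('p,'b) category \<Rightarrow> ('p,'b) ccc_structure \<Rightarrow> bool" where
  "is_ccc D S \<longleftrightarrow>
     is_category D \<and>
     one S \<in> Ob D \<and>
     (\<forall>x\<in>Ob D. bang S x \<in> hom D x (one S) \<and> (\<forall>f\<in>hom D x (one S). f = bang S x)) \<and>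
     (\<forall>x\<in>Ob D. \<forall>y\<in>Ob D.
        prd S x y \<in> Ob D \<and> pr1 S x y \<in> hom D (prd S x y) x \<and> pr2 S x y \<in> hom D (prd S x y) y \<and>
        (\<forall>z\<in>Ob D. \<forall>f\<in>hom D z x. \<forall>g\<in>hom D z y.
           pair S f g \<in> hom D z (prd S x y) \<and>
           Comp D (pr1 S x y) (pair S f g) = f \<and> Comp D (pr2 S x y) (pair S f g) = g \<and>
           (\<forall>h\<in>hom D z (prd S x y). Comp D (pr1 S x y) h = f \<and> Comp D (pr2 S x y) h = g
               \<longrightarrow> h = pair S f g))) \<and>
     (\<forall>y\<in>Ob D. \<forall>z\<in>Ob D.
        ex S y z \<in> Ob D \<and> ev S y z \<in> hom D (prd S (ex S y z) y) z \<and>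
        (\<forall>x\<in>Ob D. \<forall>h\<in>hom D (prd S x y) z.
           lam S x y z h \<in> hom D x (ex S y z) \<and>
           Comp D (ev S y z) (prod_arr D S (lam S x y z h) (Idt D y)) = h \<and>
           (\<forall>k\<in>hom D x (ex S y z). Comp D (ev S y z) (prod_arr D S k (Idt D y)) = h
               \<longrightarrow> k = lam S x y z h)))"

text \<open>Internal hom on arrows: [f,g] : [y,z] \<rightarrow> [y',z'] for f : y' \<rightarrow> y, g : z \<rightarrow> z'.\<close>
definition exp_arr :: "('p,'b) category \<Rightarrow> ('p,'b) ccc_structure \<Rightarrow> 'b \<Rightarrow> 'b \<Rightarrow> 'b" where
  "exp_arr D S f g =
     lam S (ex S (Cod D f) (Dom D g)) (Dom D f) (Cod D g)
       (Comp D g (Comp D (ev S (Cod D f) (Dom D g))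
          (prod_arr D S (Idt D (ex S (Cod D f) (Dom D g))) f)))"

definition prod_bifun ::
  "('p,'b) category \<Rightarrow> ('p,'b) ccc_structure \<Rightarrow> ('o,'a,'p,'b) bifunctor \<Rightarrow>
   ('o,'a,'p,'b) bifunctor \<Rightarrow> ('o,'a,'p,'b) bifunctor" where
  "prod_bifun D S F G =
     \<lparr> BFo = (\<lambda>x' x. prd S (BFo F x' x) (BFo G x' x)),
       BFa = (\<lambda>f g. prod_arr D S (BFa F f g) (BFa G f g)) \<rparr>"

definition exp_bifun ::
  "('p,'b) category \<Rightarrow> ('p,'b) ccc_structure \<Rightarrow> ('o,'a,'p,'b) bifunctor \<Rightarrow>
   ('o,'a,'p,'b) bifunctor \<Rightarrow> ('o,'a,'p,'b) bifunctor" where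
  "exp_bifun D S F H =
     \<lparr> BFo = (\<lambda>x' x. ex S (BFo F x x') (BFo H x' x)),
       BFa = (\<lambda>f g. exp_arr D S (BFa F g f) (BFa H f g)) \<rparr>"

definition dinat ::
  "('o,'a) category \<Rightarrow> ('p,'b) category \<Rightarrow> ('o,'a,'p,'b) bifunctor \<Rightarrow>
   ('o,'a,'p,'b) bifunctor \<Rightarrow> ('o \<Rightarrow> 'b) set" where
  "dinat C D F G =
     {\<alpha>. (\<forall>x\<in>Ob C. \<alpha> x \<in> hom D (BFo F x x) (BFo G x x)) \<and>
         (\<forall>x. x \<notin> Ob C \<longrightarrow> \<alpha> x = undefined) \<and>
         (\<forall>f\<in>Ar C.
            Comp D (Comp D (BFa G f (Idt C (Cod C f))) (\<alpha> (Cod C f))) (BFa F (Idt C (Cod C f)) f)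
          = Comp D (Comp D (BFa G (Idt C (Dom C f)) f) (\<alpha> (Dom C f))) (BFa F f (Idt C (Dom C f))))}"

end

theory Submission
  imports Defs
begin

locale ccc =
  fixes D :: "('p,'b) category" and S :: "('p,'b) ccc_structure"
  assumes ccc: "is_ccc D S"
begin

lemma cat: "is_category D" using ccc unfolding is_ccc_def by simp

lemma hom_ob: "f \<in> hom D x y \<Longrightarrow> x \<in> Ob D \<and> y \<in> Ob D"
  using cat unfolding is_category_def hom_def by auto

lemma comp_hom: "f \<in> hom D x y \<Longrightarrow> g \<in> hom D y z \<Longrightarrow> Comp D g f \<in> hom D x z"
  using cat unfolding is_category_def hom_def by auto

lemma assoc: "f \<in> hom D x y \<Longrightarrow> g \<in> hom D y z \<Longrightarrow> h \<in> hom D z w \<Longrightarrow>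
   Comp D h (Comp D g f) = Comp D (Comp D h g) f"
  using cat unfolding is_category_def hom_def by auto

lemma id_hom: "x \<in> Ob D \<Longrightarrow> Idt D x \<in> hom D x x"
  using cat unfolding is_category_def by auto

lemma idl: "f \<in> hom D x y \<Longrightarrow> Comp D (Idt D y) f = f"
  using cat unfolding is_category_def hom_def by auto

lemma idr: "f \<in> hom D x y \<Longrightarrow> Comp D f (Idt D x) = f"
  using cat unfolding is_category_def hom_def by auto

lemma prd_ob: "x \<in> Ob D \<Longrightarrow> y \<in> Ob D \<Longrightarrow> prd S x y \<in> Ob D"
  using ccc unfolding is_ccc_def by auto
lemma pr1_hom: "x \<in> Ob D \<Longrightarrow> y \<in> Ob D \<Longrightarrow> pr1 S x y \<in> hom D (prd S x y) x"
  using ccc unfolding is_ccc_def by auto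
lemma pr2_hom: "x \<in> Ob D \<Longrightarrow> y \<in> Ob D \<Longrightarrow> pr2 S x y \<in> hom D (prd S x y) y"
  using ccc unfolding is_ccc_def by auto

lemma pair_props: "f \<in> hom D z x \<Longrightarrow> g \<in> hom D z y \<Longrightarrow>
    pair S f g \<in> hom D z (prd S x y) \<and>
    Comp D (pr1 S x y) (pair S f g) = f \<and> Comp D (pr2 S x y) (pair S f g) = g \<and>
    (\<forall>h\<in>hom D z (prd S x y). Comp D (pr1 S x y) h = f \<and> Comp D (pr2 S x y) h = g
               \<longrightarrow> h = pair S f g)"
proof -
  assume a: "f \<in> hom D z x" "g \<in> hom D z y"
  then have "x \<in> Ob D" "y \<in> Ob D" "z \<in> Ob D" using hom_ob by auto
  have all: "\<forall>x\<in>Ob D. \<forall>y\<in>Ob D.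
        prd S x y \<in> Ob D \<and> pr1 S x y \<in> hom D (prd S x y) x \<and> pr2 S x y \<in> hom D (prd S x y) y \<and>
        (\<forall>z\<in>Ob D. \<forall>f\<in>hom D z x. \<forall>g\<in>hom D z y.
           pair S f g \<in> hom D z (prd S x y) \<and>
           Comp D (pr1 S x y) (pair S f g) = f \<and> Comp D (pr2 S x y) (pair S f g) = g \<and>
           (\<forall>h\<in>hom D z (prd S x y). Comp D (pr1 S x y) h = f \<and> Comp D (pr2 S x y) h = g
               \<longrightarrow> h = pair S f g))"
    by (rule ccc[unfolded is_ccc_def, THEN conjunct2, THEN conjunct2, THEN conjunct2, THEN conjunct1])
  have P: "\<forall>z\<in>Ob D. \<forall>f\<in>hom D z x. \<forall>g\<in>hom D z y.
           pair S f g \<in> hom D z (prd S x y) \<and>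
           Comp D (pr1 S x y) (pair S f g) = f \<and> Comp D (pr2 S x y) (pair S f g) = g \<and>
           (\<forall>h\<in>hom D z (prd S x y). Comp D (pr1 S x y) h = f \<and> Comp D (pr2 S x y) h = g
               \<longrightarrow> h = pair S f g)"
    using bspec[OF bspec[OF all \<open>x \<in> Ob D\<close>] \<open>y \<in> Ob D\<close>] by (elim conjE)
  show ?thesis by (rule bspec[OF bspec[OF bspec[OF P \<open>z \<in> Ob D\<close>] a(1)] a(2)])
qed

lemma pair_hom: "f \<in> hom D z x \<Longrightarrow> g \<in> hom D z y \<Longrightarrow> pair S f g \<in> hom D z (prd S x y)"
  by (rule pair_props[THEN conjunct1])
lemma pr1_pair: "f \<in> hom D z x \<Longrightarrow> g \<in> hom D z y \<Longrightarrow> Comp D (pr1 S x y) (pair S f g) = f"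
  by (rule pair_props[THEN conjunct2, THEN conjunct1])
lemma pr2_pair: "f \<in> hom D z x \<Longrightarrow> g \<in> hom D z y \<Longrightarrow> Comp D (pr2 S x y) (pair S f g) = g"
  by (rule pair_props[THEN conjunct2, THEN conjunct2, THEN conjunct1])

lemma pair_uniq: assumes "f \<in> hom D z x" "g \<in> hom D z y" "h \<in> hom D z (prd S x y)"
  "Comp D (pr1 S x y) h = f" "Comp D (pr2 S x y) h = g" shows "h = pair S f g"
proof -
  have "\<forall>h\<in>hom D z (prd S x y). Comp D (pr1 S x y) h = f \<and> Comp D (pr2 S x y) h = g
               \<longrightarrow> h = pair S f g"
    by (rule pair_props[OF assms(1,2), THEN conjunct2, THEN conjunct2, THEN conjunct2])
  from bspec[OF this assms(3)] have "Comp D (pr1 S x y) h = f \<and> Comp D (pr2 S x y) h = g \<longrightarrow> h = pair S f g" .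
  then show ?thesis using conjI[OF assms(4,5)] by (rule mp)
qed

lemma pair_eq:
  assumes ob: "x \<in> Ob D" "y \<in> Ob D" and "h1 \<in> hom D z (prd S x y)" "h2 \<in> hom D z (prd S x y)"
    "Comp D (pr1 S x y) h1 = Comp D (pr1 S x y) h2" "Comp D (pr2 S x y) h1 = Comp D (pr2 S x y) h2"
  shows "h1 = h2"
proof -
  have f: "Comp D (pr1 S x y) h2 \<in> hom D z x" by (rule comp_hom[OF assms(4) pr1_hom[OF ob]])
  have g: "Comp D (pr2 S x y) h2 \<in> hom D z y" by (rule comp_hom[OF assms(4) pr2_hom[OF ob]])
  have "h1 = pair S (Comp D (pr1 S x y) h2) (Comp D (pr2 S x y) h2)"
    by (rule pair_uniq[OF f g assms(3,5,6)])
  moreover have "h2 = pair S (Comp D (pr1 S x y) h2) (Comp D (pr2 S x y) h2)"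
    by (rule pair_uniq[OF f g assms(4) refl refl])
  ultimately show ?thesis by simp
qed

lemma prod_arr_eq: "f \<in> hom D a b \<Longrightarrow> g \<in> hom D c d \<Longrightarrow>
   prod_arr D S f g = pair S (Comp D f (pr1 S a c)) (Comp D g (pr2 S a c))"
  unfolding prod_arr_def hom_def by auto

lemma fp1: "f \<in> hom D a b \<Longrightarrow> g \<in> hom D c d \<Longrightarrow> Comp D f (pr1 S a c) \<in> hom D (prd S a c) b"
  by (meson comp_hom hom_ob pr1_hom)
lemma gp2: "f \<in> hom D a b \<Longrightarrow> g \<in> hom D c d \<Longrightarrow> Comp D g (pr2 S a c) \<in> hom D (prd S a c) d"
  by (meson comp_hom hom_ob pr2_hom)

lemma prod_arr_hom: "f \<in> hom D a b \<Longrightarrow> g \<in> hom D c d \<Longrightarrow>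
   prod_arr D S f g \<in> hom D (prd S a c) (prd S b d)"
  apply (subst prod_arr_eq, assumption+)
  apply (rule pair_hom)
   apply (rule fp1, assumption+)
  apply (rule gp2, assumption+)
  done

lemma pr1_prod_arr: "f \<in> hom D a b \<Longrightarrow> g \<in> hom D c d \<Longrightarrow>
   Comp D (pr1 S b d) (prod_arr D S f g) = Comp D f (pr1 S a c)"
  apply (subst prod_arr_eq, assumption+)
  apply (rule pr1_pair)
   apply (rule fp1, assumption+)
  apply (rule gp2, assumption+)
  done

lemma pr2_prod_arr: "f \<in> hom D a b \<Longrightarrow> g \<in> hom D c d \<Longrightarrow>
   Comp D (pr2 S b d) (prod_arr D S f g) = Comp D g (pr2 S a c)"
  apply (subst prod_arr_eq, assumption+)
  apply (rule pr2_pair)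
   apply (rule fp1, assumption+)
  apply (rule gp2, assumption+)
  done

lemma prod_arr_comp:
  assumes f: "f \<in> hom D a b" and g: "g \<in> hom D c d" and f': "f' \<in> hom D b b'" and g': "g' \<in> hom D d d'"
  shows "Comp D (prod_arr D S f' g') (prod_arr D S f g) = prod_arr D S (Comp D f' f) (Comp D g' g)"
proof -
  have ob: "a \<in> Ob D" "b \<in> Ob D" "c \<in> Ob D" "d \<in> Ob D" "b' \<in> Ob D" "d' \<in> Ob D"
    using f g f' g' hom_ob by blast+
  have P: "prod_arr D S f g \<in> hom D (prd S a c) (prd S b d)" using prod_arr_hom f g by blast
  have P': "prod_arr D S f' g' \<in> hom D (prd S b d) (prd S b' d')" using prod_arr_hom f' g' by blast
  have ff: "Comp D f' f \<in> hom D a b'" using comp_hom f f' by blast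
  have gg: "Comp D g' g \<in> hom D c d'" using comp_hom g g' by blast
  note p1 = pr1_hom[OF ob(5) ob(6)] pr1_hom[OF ob(2) ob(4)] pr1_hom[OF ob(1) ob(3)]
  note p2 = pr2_hom[OF ob(5) ob(6)] pr2_hom[OF ob(2) ob(4)] pr2_hom[OF ob(1) ob(3)]
  show ?thesis
  proof (rule pair_eq[OF ob(5) ob(6)])
    show "Comp D (prod_arr D S f' g') (prod_arr D S f g) \<in> hom D (prd S a c) (prd S b' d')"
      using comp_hom P P' by blast
    show "prod_arr D S (Comp D f' f) (Comp D g' g) \<in> hom D (prd S a c) (prd S b' d')"
      using prod_arr_hom ff gg by blast
    have "Comp D (pr1 S b' d') (Comp D (prod_arr D S f' g') (prod_arr D S f g))
        = Comp D (Comp D (pr1 S b' d') (prod_arr D S f' g')) (prod_arr D S f g)"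
      by (rule assoc[OF P P' p1(1)])
    also have "\<dots> = Comp D (Comp D f' (pr1 S b d)) (prod_arr D S f g)"
      by (simp only: pr1_prod_arr[OF f' g'])
    also have "\<dots> = Comp D f' (Comp D (pr1 S b d) (prod_arr D S f g))"
      by (rule assoc[OF P p1(2) f', symmetric])
    also have "\<dots> = Comp D f' (Comp D f (pr1 S a c))"
      by (simp only: pr1_prod_arr[OF f g])
    also have "\<dots> = Comp D (Comp D f' f) (pr1 S a c)"
      by (rule assoc[OF p1(3) f f'])
    also have "\<dots> = Comp D (pr1 S b' d') (prod_arr D S (Comp D f' f) (Comp D g' g))"
      by (simp only: pr1_prod_arr[OF ff gg])
    finally show "Comp D (pr1 S b' d') (Comp D (prod_arr D S f' g') (prod_arr D S f g))
        = Comp D (pr1 S b' d') (prod_arr D S (Comp D f' f) (Comp D g' g))" .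
    have "Comp D (pr2 S b' d') (Comp D (prod_arr D S f' g') (prod_arr D S f g))
        = Comp D (Comp D (pr2 S b' d') (prod_arr D S f' g')) (prod_arr D S f g)"
      by (rule assoc[OF P P' p2(1)])
    also have "\<dots> = Comp D (Comp D g' (pr2 S b d)) (prod_arr D S f g)"
      by (simp only: pr2_prod_arr[OF f' g'])
    also have "\<dots> = Comp D g' (Comp D (pr2 S b d) (prod_arr D S f g))"
      by (rule assoc[OF P p2(2) g', symmetric])
    also have "\<dots> = Comp D g' (Comp D g (pr2 S a c))"
      by (simp only: pr2_prod_arr[OF f g])
    also have "\<dots> = Comp D (Comp D g' g) (pr2 S a c)"
      by (rule assoc[OF p2(3) g g'])
    also have "\<dots> = Comp D (pr2 S b' d') (prod_arr D S (Comp D f' f) (Comp D g' g))"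
      by (simp only: pr2_prod_arr[OF ff gg])
    finally show "Comp D (pr2 S b' d') (Comp D (prod_arr D S f' g') (prod_arr D S f g))
        = Comp D (pr2 S b' d') (prod_arr D S (Comp D f' f) (Comp D g' g))" .
  qed
qed

definition sw where "sw a c = pair S (pr2 S a c) (pr1 S a c)"

lemma sw_hom: "a \<in> Ob D \<Longrightarrow> c \<in> Ob D \<Longrightarrow> sw a c \<in> hom D (prd S a c) (prd S c a)"
  unfolding sw_def by (intro pair_hom pr1_hom[of a c] pr2_hom[of a c])

lemma pr1_sw: "a \<in> Ob D \<Longrightarrow> c \<in> Ob D \<Longrightarrow> Comp D (pr1 S c a) (sw a c) = pr2 S a c"
  unfolding sw_def by (intro pr1_pair[of _ "prd S a c"] pr1_hom[of a c] pr2_hom[of a c])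
lemma pr2_sw: "a \<in> Ob D \<Longrightarrow> c \<in> Ob D \<Longrightarrow> Comp D (pr2 S c a) (sw a c) = pr1 S a c"
  unfolding sw_def by (intro pr2_pair[of _ "prd S a c"] pr1_hom[of a c] pr2_hom[of a c])

lemma sw_sw:
  assumes ob: "a \<in> Ob D" "c \<in> Ob D"
  shows "Comp D (sw c a) (sw a c) = Idt D (prd S a c)"
proof (rule pair_eq[OF ob(1) ob(2)])
  have s1: "sw a c \<in> hom D (prd S a c) (prd S c a)" using sw_hom ob by blast
  have s2: "sw c a \<in> hom D (prd S c a) (prd S a c)" using sw_hom ob by blast
  have I: "Idt D (prd S a c) \<in> hom D (prd S a c) (prd S a c)" using id_hom prd_ob ob by blast
  show "Comp D (sw c a) (sw a c) \<in> hom D (prd S a c) (prd S a c)" using comp_hom s1 s2 by blast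
  show "Idt D (prd S a c) \<in> hom D (prd S a c) (prd S a c)" by (rule I)
  have "Comp D (pr1 S a c) (Comp D (sw c a) (sw a c)) = Comp D (Comp D (pr1 S a c) (sw c a)) (sw a c)"
    using assoc s1 s2 pr1_hom ob by blast
  also have "\<dots> = pr1 S a c" using pr1_sw pr2_sw ob by simp
  also have "\<dots> = Comp D (pr1 S a c) (Idt D (prd S a c))" using idr pr1_hom ob by metis
  finally show "Comp D (pr1 S a c) (Comp D (sw c a) (sw a c)) = Comp D (pr1 S a c) (Idt D (prd S a c))" .
  have "Comp D (pr2 S a c) (Comp D (sw c a) (sw a c)) = Comp D (Comp D (pr2 S a c) (sw c a)) (sw a c)"
    using assoc s1 s2 pr2_hom ob by blast
  also have "\<dots> = pr2 S a c" using pr1_sw pr2_sw ob by simp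
  also have "\<dots> = Comp D (pr2 S a c) (Idt D (prd S a c))" using idr pr2_hom ob by metis
  finally show "Comp D (pr2 S a c) (Comp D (sw c a) (sw a c)) = Comp D (pr2 S a c) (Idt D (prd S a c))" .
qed

lemma sw_nat:
  assumes f: "f \<in> hom D a b" and g: "g \<in> hom D c d"
  shows "Comp D (sw b d) (prod_arr D S f g) = Comp D (prod_arr D S g f) (sw a c)"
proof -
  have ob: "a \<in> Ob D" "b \<in> Ob D" "c \<in> Ob D" "d \<in> Ob D" using f g hom_ob by blast+
  have P: "prod_arr D S f g \<in> hom D (prd S a c) (prd S b d)" using prod_arr_hom f g by blast
  have Q: "prod_arr D S g f \<in> hom D (prd S c a) (prd S d b)" using prod_arr_hom f g by blast
  have s1: "sw a c \<in> hom D (prd S a c) (prd S c a)" using sw_hom ob by blast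
  have s2: "sw b d \<in> hom D (prd S b d) (prd S d b)" using sw_hom ob by blast
  show ?thesis
  proof (rule pair_eq[OF ob(4) ob(2)])
    show "Comp D (sw b d) (prod_arr D S f g) \<in> hom D (prd S a c) (prd S d b)" using comp_hom P s2 by blast
    show "Comp D (prod_arr D S g f) (sw a c) \<in> hom D (prd S a c) (prd S d b)" using comp_hom Q s1 by blast
    have "Comp D (pr1 S d b) (Comp D (sw b d) (prod_arr D S f g))
       = Comp D (Comp D (pr1 S d b) (sw b d)) (prod_arr D S f g)" using assoc P s2 pr1_hom ob by blast
    also have "\<dots> = Comp D (pr2 S b d) (prod_arr D S f g)" using pr1_sw ob by simp
    also have "\<dots> = Comp D g (pr2 S a c)" using pr2_prod_arr f g by simp
    also have "\<dots> = Comp D g (Comp D (pr1 S c a) (sw a c))" using pr1_sw ob by simp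
    also have "\<dots> = Comp D (Comp D g (pr1 S c a)) (sw a c)" using assoc s1 g pr1_hom ob by blast
    also have "\<dots> = Comp D (Comp D (pr1 S d b) (prod_arr D S g f)) (sw a c)" using pr1_prod_arr f g by simp
    also have "\<dots> = Comp D (pr1 S d b) (Comp D (prod_arr D S g f) (sw a c))" using assoc Q s1 pr1_hom ob by metis
    finally show "Comp D (pr1 S d b) (Comp D (sw b d) (prod_arr D S f g)) =
      Comp D (pr1 S d b) (Comp D (prod_arr D S g f) (sw a c))" .
    have "Comp D (pr2 S d b) (Comp D (sw b d) (prod_arr D S f g))
       = Comp D (Comp D (pr2 S d b) (sw b d)) (prod_arr D S f g)" using assoc P s2 pr2_hom ob by blast
    also have "\<dots> = Comp D (pr1 S b d) (prod_arr D S f g)" using pr2_sw ob by simp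
    also have "\<dots> = Comp D f (pr1 S a c)" using pr1_prod_arr f g by simp
    also have "\<dots> = Comp D f (Comp D (pr2 S c a) (sw a c))" using pr2_sw ob by simp
    also have "\<dots> = Comp D (Comp D f (pr2 S c a)) (sw a c)" using assoc s1 f pr2_hom ob by blast
    also have "\<dots> = Comp D (Comp D (pr2 S d b) (prod_arr D S g f)) (sw a c)" using pr2_prod_arr f g by simp
    also have "\<dots> = Comp D (pr2 S d b) (Comp D (prod_arr D S g f) (sw a c))" using assoc Q s1 pr2_hom ob by metis
    finally show "Comp D (pr2 S d b) (Comp D (sw b d) (prod_arr D S f g)) =
      Comp D (pr2 S d b) (Comp D (prod_arr D S g f) (sw a c))" .
  qed
qed

end

context ccc begin

lemma exp_props: assumes "y \<in> Ob D" "z \<in> Ob D"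
  shows "ex S y z \<in> Ob D \<and> ev S y z \<in> hom D (prd S (ex S y z) y) z \<and>
        (\<forall>x\<in>Ob D. \<forall>h\<in>hom D (prd S x y) z.
           lam S x y z h \<in> hom D x (ex S y z) \<and>
           Comp D (ev S y z) (prod_arr D S (lam S x y z h) (Idt D y)) = h \<and>
           (\<forall>k\<in>hom D x (ex S y z). Comp D (ev S y z) (prod_arr D S k (Idt D y)) = h
               \<longrightarrow> k = lam S x y z h))"
proof -
  have all: "\<forall>y\<in>Ob D. \<forall>z\<in>Ob D.
        ex S y z \<in> Ob D \<and> ev S y z \<in> hom D (prd S (ex S y z) y) z \<and>
        (\<forall>x\<in>Ob D. \<forall>h\<in>hom D (prd S x y) z.
           lam S x y z h \<in> hom D x (ex S y z) \<and>
           Comp D (ev S y z) (prod_arr D S (lam S x y z h) (Idt D y)) = h \<and>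
           (\<forall>k\<in>hom D x (ex S y z). Comp D (ev S y z) (prod_arr D S k (Idt D y)) = h
               \<longrightarrow> k = lam S x y z h))"
    by (rule ccc[unfolded is_ccc_def, THEN conjunct2, THEN conjunct2, THEN conjunct2, THEN conjunct2])
  show ?thesis by (rule bspec[OF bspec[OF all assms(1)] assms(2)])
qed

lemma ex_ob: "y \<in> Ob D \<Longrightarrow> z \<in> Ob D \<Longrightarrow> ex S y z \<in> Ob D"
  by (rule exp_props[THEN conjunct1])
lemma ev_hom: "y \<in> Ob D \<Longrightarrow> z \<in> Ob D \<Longrightarrow> ev S y z \<in> hom D (prd S (ex S y z) y) z"
  by (rule exp_props[THEN conjunct2, THEN conjunct1])

lemma lam_props: assumes "x \<in> Ob D" "y \<in> Ob D" "z \<in> Ob D" "h \<in> hom D (prd S x y) z"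
  shows "lam S x y z h \<in> hom D x (ex S y z) \<and>
           Comp D (ev S y z) (prod_arr D S (lam S x y z h) (Idt D y)) = h \<and>
           (\<forall>k\<in>hom D x (ex S y z). Comp D (ev S y z) (prod_arr D S k (Idt D y)) = h
               \<longrightarrow> k = lam S x y z h)"
  by (rule bspec[OF bspec[OF exp_props[OF assms(2,3), THEN conjunct2, THEN conjunct2] assms(1)] assms(4)])

lemma lam_hom: "x \<in> Ob D \<Longrightarrow> y \<in> Ob D \<Longrightarrow> z \<in> Ob D \<Longrightarrow> h \<in> hom D (prd S x y) z \<Longrightarrow>
  lam S x y z h \<in> hom D x (ex S y z)"
  by (rule lam_props[THEN conjunct1])

definition U where "U y z k = Comp D (ev S y z) (prod_arr D S k (Idt D y))"

lemma U_lam: "x \<in> Ob D \<Longrightarrow> y \<in> Ob D \<Longrightarrow> z \<in> Ob D \<Longrightarrow> h \<in> hom D (prd S x y) z \<Longrightarrow>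
  U y z (lam S x y z h) = h"
  unfolding U_def by (rule lam_props[THEN conjunct2, THEN conjunct1])

lemma lam_uniq: assumes "x \<in> Ob D" "y \<in> Ob D" "z \<in> Ob D" "h \<in> hom D (prd S x y) z"
  "k \<in> hom D x (ex S y z)" "U y z k = h" shows "k = lam S x y z h"
proof -
  have "\<forall>k\<in>hom D x (ex S y z). Comp D (ev S y z) (prod_arr D S k (Idt D y)) = h
               \<longrightarrow> k = lam S x y z h" by (rule lam_props[OF assms(1-4), THEN conjunct2, THEN conjunct2])
  from bspec[OF this assms(5)] have "Comp D (ev S y z) (prod_arr D S k (Idt D y)) = h \<longrightarrow> k = lam S x y z h" .
  then show ?thesis using assms(6)[unfolded U_def] by (rule mp)
qed

lemma U_hom: assumes "y \<in> Ob D" "z \<in> Ob D" "k \<in> hom D x (ex S y z)"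
  shows "U y z k \<in> hom D (prd S x y) z"
  unfolding U_def by (rule comp_hom[OF prod_arr_hom[OF assms(3) id_hom[OF assms(1)]] ev_hom[OF assms(1,2)]])

lemma U_inj: assumes "x \<in> Ob D" "y \<in> Ob D" "z \<in> Ob D" "k1 \<in> hom D x (ex S y z)" "k2 \<in> hom D x (ex S y z)"
  "U y z k1 = U y z k2" shows "k1 = k2"
proof -
  have h: "U y z k2 \<in> hom D (prd S x y) z" by (rule U_hom[OF assms(2,3,5)])
  have "k1 = lam S x y z (U y z k2)" by (rule lam_uniq[OF assms(1-3) h assms(4,6)])
  moreover have "k2 = lam S x y z (U y z k2)" by (rule lam_uniq[OF assms(1-3) h assms(5) refl])
  ultimately show ?thesis by simp
qed

lemma U_comp: assumes y: "y \<in> Ob D" and z: "z \<in> Ob D" and k: "k \<in> hom D x (ex S y z)" and g: "g \<in> hom D w x"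
  shows "U y z (Comp D k g) = Comp D (U y z k) (prod_arr D S g (Idt D y))"
proof -
  have I: "Idt D y \<in> hom D y y" by (rule id_hom[OF y])
  have "prod_arr D S (Comp D k g) (Idt D y) = prod_arr D S (Comp D k g) (Comp D (Idt D y) (Idt D y))"
    using idl[OF I] by simp
  also have "\<dots> = Comp D (prod_arr D S k (Idt D y)) (prod_arr D S g (Idt D y))"
    by (rule prod_arr_comp[OF g I k I, symmetric])
  finally have e: "prod_arr D S (Comp D k g) (Idt D y) = Comp D (prod_arr D S k (Idt D y)) (prod_arr D S g (Idt D y))" .
  show ?thesis unfolding U_def e
    by (rule assoc[OF prod_arr_hom[OF g I] prod_arr_hom[OF k I] ev_hom[OF y z]])
qed

lemma exp_arr_eq: "u \<in> hom D y' y \<Longrightarrow> v \<in> hom D z z' \<Longrightarrow>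
  exp_arr D S u v = lam S (ex S y z) y' z' (Comp D v (Comp D (ev S y z) (prod_arr D S (Idt D (ex S y z)) u)))"
  unfolding exp_arr_def hom_def by simp

lemma W_hom: assumes y: "y \<in> Ob D" and z: "z \<in> Ob D" and u: "u \<in> hom D y' y" and v: "v \<in> hom D z z'"
  shows "Comp D v (Comp D (ev S y z) (prod_arr D S (Idt D (ex S y z)) u)) \<in> hom D (prd S (ex S y z) y') z'"
  by (rule comp_hom[OF comp_hom[OF prod_arr_hom[OF id_hom[OF ex_ob[OF y z]] u] ev_hom[OF y z]] v])

lemma exp_arr_hom: assumes y: "y \<in> Ob D" and z: "z \<in> Ob D" and y': "y' \<in> Ob D" and z': "z' \<in> Ob D"
  and u: "u \<in> hom D y' y" and v: "v \<in> hom D z z'"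
  shows "exp_arr D S u v \<in> hom D (ex S y z) (ex S y' z')"
  unfolding exp_arr_eq[OF u v] by (rule lam_hom[OF ex_ob[OF y z] y' z' W_hom[OF y z u v]])

lemma U_exp_comp: assumes y: "y \<in> Ob D" and z: "z \<in> Ob D" and y': "y' \<in> Ob D" and z': "z' \<in> Ob D"
  and u: "u \<in> hom D y' y" and v: "v \<in> hom D z z'" and k: "k \<in> hom D x (ex S y z)" and x: "x \<in> Ob D"
  shows "U y' z' (Comp D (exp_arr D S u v) k) = Comp D v (Comp D (U y z k) (prod_arr D S (Idt D x) u))"
proof -
  have E: "exp_arr D S u v \<in> hom D (ex S y z) (ex S y' z')" by (rule exp_arr_hom[OF y z y' z' u v])
  have exo: "ex S y z \<in> Ob D" by (rule ex_ob[OF y z])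
  have Iex: "Idt D (ex S y z) \<in> hom D (ex S y z) (ex S y z)" by (rule id_hom[OF exo])
  have Iy': "Idt D y' \<in> hom D y' y'" by (rule id_hom[OF y'])
  have Iy: "Idt D y \<in> hom D y y" by (rule id_hom[OF y])
  have Ix: "Idt D x \<in> hom D x x" by (rule id_hom[OF x])
  have ev: "ev S y z \<in> hom D (prd S (ex S y z) y) z" by (rule ev_hom[OF y z])
  have P1: "prod_arr D S (Idt D (ex S y z)) u \<in> hom D (prd S (ex S y z) y') (prd S (ex S y z) y)"
    by (rule prod_arr_hom[OF Iex u])
  have P2: "prod_arr D S k (Idt D y') \<in> hom D (prd S x y') (prd S (ex S y z) y')"
    by (rule prod_arr_hom[OF k Iy'])
  have P3: "prod_arr D S k (Idt D y) \<in> hom D (prd S x y) (prd S (ex S y z) y)"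
    by (rule prod_arr_hom[OF k Iy])
  have P4: "prod_arr D S (Idt D x) u \<in> hom D (prd S x y') (prd S x y)"
    by (rule prod_arr_hom[OF Ix u])
  have c1: "Comp D (prod_arr D S (Idt D (ex S y z)) u) (prod_arr D S k (Idt D y')) = prod_arr D S k u"
    using prod_arr_comp[OF k Iy' Iex u] idl[OF k] idr[OF u] by simp
  have c2: "Comp D (prod_arr D S k (Idt D y)) (prod_arr D S (Idt D x) u) = prod_arr D S k u"
    using prod_arr_comp[OF Ix u k Iy] idr[OF k] idl[OF u] by simp
  have evP1: "Comp D (ev S y z) (prod_arr D S (Idt D (ex S y z)) u) \<in> hom D (prd S (ex S y z) y') z"
    by (rule comp_hom[OF P1 ev])
  have "U y' z' (Comp D (exp_arr D S u v) k) = Comp D (U y' z' (exp_arr D S u v)) (prod_arr D S k (Idt D y'))"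
    by (rule U_comp[OF y' z' E k])
  also have "U y' z' (exp_arr D S u v) = Comp D v (Comp D (ev S y z) (prod_arr D S (Idt D (ex S y z)) u))"
    unfolding exp_arr_eq[OF u v] by (rule U_lam[OF exo y' z' W_hom[OF y z u v]])
  also have "Comp D (Comp D v (Comp D (ev S y z) (prod_arr D S (Idt D (ex S y z)) u))) (prod_arr D S k (Idt D y'))
     = Comp D v (Comp D (Comp D (ev S y z) (prod_arr D S (Idt D (ex S y z)) u)) (prod_arr D S k (Idt D y')))"
    by (rule assoc[OF P2 evP1 v, symmetric])
  also have "Comp D (Comp D (ev S y z) (prod_arr D S (Idt D (ex S y z)) u)) (prod_arr D S k (Idt D y'))
     = Comp D (ev S y z) (prod_arr D S k u)"
    using assoc[OF P2 P1 ev] c1 by simp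
  also have "Comp D (ev S y z) (prod_arr D S k u) = Comp D (U y z k) (prod_arr D S (Idt D x) u)"
    unfolding U_def using assoc[OF P4 P3 ev] c2 by simp
  finally show ?thesis .
qed

end

context ccc begin

lemma transfer:
  assumes ob: "Fb \<in> Ob D" "Gb \<in> Ob D" "Hb \<in> Ob D" "X \<in> Ob D" "Y \<in> Ob D" "Z \<in> Ob D"
  and al: "al \<in> hom D (prd S Fb Gb) Hb" and be: "be \<in> hom D Gb (ex S Fb Hb)"
  and Ub: "U Fb Hb be = Comp D al (sw Gb Fb)"
  and u: "u \<in> hom D Y Fb" and g: "g \<in> hom D X Gb" and v: "v \<in> hom D Hb Z"
  shows "U Y Z (Comp D (Comp D (exp_arr D S u v) be) g) = Comp D (Comp D (Comp D v al) (prod_arr D S u g)) (sw X Y)"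
proof -
  have E: "exp_arr D S u v \<in> hom D (ex S Fb Hb) (ex S Y Z)" by (rule exp_arr_hom[OF ob(1,3,5,6) u v])
  have Eb: "Comp D (exp_arr D S u v) be \<in> hom D Gb (ex S Y Z)" by (rule comp_hom[OF be E])
  have IG: "Idt D Gb \<in> hom D Gb Gb" by (rule id_hom[OF ob(2)])
  have IY: "Idt D Y \<in> hom D Y Y" by (rule id_hom[OF ob(5)])
  have Ubh: "U Fb Hb be \<in> hom D (prd S Gb Fb) Hb" by (rule U_hom[OF ob(1,3) be])
  have P1: "prod_arr D S (Idt D Gb) u \<in> hom D (prd S Gb Y) (prd S Gb Fb)" by (rule prod_arr_hom[OF IG u])
  have P2: "prod_arr D S g (Idt D Y) \<in> hom D (prd S X Y) (prd S Gb Y)" by (rule prod_arr_hom[OF g IY])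
  have P3: "prod_arr D S g u \<in> hom D (prd S X Y) (prd S Gb Fb)" by (rule prod_arr_hom[OF g u])
  have P4: "prod_arr D S u g \<in> hom D (prd S Y X) (prd S Fb Gb)" by (rule prod_arr_hom[OF u g])
  have s1: "sw Gb Fb \<in> hom D (prd S Gb Fb) (prd S Fb Gb)" by (rule sw_hom[OF ob(2,1)])
  have s2: "sw X Y \<in> hom D (prd S X Y) (prd S Y X)" by (rule sw_hom[OF ob(4,5)])
  have UP1: "Comp D (U Fb Hb be) (prod_arr D S (Idt D Gb) u) \<in> hom D (prd S Gb Y) Hb" by (rule comp_hom[OF P1 Ubh])
  have c: "Comp D (prod_arr D S (Idt D Gb) u) (prod_arr D S g (Idt D Y)) = prod_arr D S g u"
    using prod_arr_comp[OF g IY IG u] idl[OF g] idr[OF u] by simp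
  have "U Y Z (Comp D (Comp D (exp_arr D S u v) be) g) = Comp D (U Y Z (Comp D (exp_arr D S u v) be)) (prod_arr D S g (Idt D Y))"
    by (rule U_comp[OF ob(5,6) Eb g])
  also have "U Y Z (Comp D (exp_arr D S u v) be) = Comp D v (Comp D (U Fb Hb be) (prod_arr D S (Idt D Gb) u))"
    by (rule U_exp_comp[OF ob(1,3,5,6) u v be ob(2)])
  also have "Comp D (Comp D v (Comp D (U Fb Hb be) (prod_arr D S (Idt D Gb) u))) (prod_arr D S g (Idt D Y))
     = Comp D v (Comp D (Comp D (U Fb Hb be) (prod_arr D S (Idt D Gb) u)) (prod_arr D S g (Idt D Y)))"
    by (rule assoc[OF P2 UP1 v, symmetric])
  also have "Comp D (Comp D (U Fb Hb be) (prod_arr D S (Idt D Gb) u)) (prod_arr D S g (Idt D Y))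
     = Comp D (U Fb Hb be) (prod_arr D S g u)"
    using assoc[OF P2 P1 Ubh] c by simp
  also have "Comp D (U Fb Hb be) (prod_arr D S g u) = Comp D al (Comp D (sw Gb Fb) (prod_arr D S g u))"
    unfolding Ub by (rule assoc[OF P3 s1 al, symmetric])
  also have "Comp D (sw Gb Fb) (prod_arr D S g u) = Comp D (prod_arr D S u g) (sw X Y)"
    by (rule sw_nat[OF g u])
  also have "Comp D al (Comp D (prod_arr D S u g) (sw X Y)) = Comp D (Comp D al (prod_arr D S u g)) (sw X Y)"
    by (rule assoc[OF s2 P4 al])
  also have "Comp D v (Comp D (Comp D al (prod_arr D S u g)) (sw X Y)) = Comp D (Comp D v (Comp D al (prod_arr D S u g))) (sw X Y)"
    by (rule assoc[OF s2 comp_hom[OF P4 al] v])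
  also have "Comp D v (Comp D al (prod_arr D S u g)) = Comp D (Comp D v al) (prod_arr D S u g)"
    by (rule assoc[OF P4 al v])
  finally show ?thesis .
qed

lemma dinat_equiv:
  assumes oba: "Fa \<in> Ob D" "Ga \<in> Ob D" "Ha \<in> Ob D"
  and obb: "Fb \<in> Ob D" "Gb \<in> Ob D" "Hb \<in> Ob D"
  and ob: "X \<in> Ob D" "Y \<in> Ob D" "Z \<in> Ob D"
  and ala: "ala \<in> hom D (prd S Fa Ga) Ha" and bea: "bea \<in> hom D Ga (ex S Fa Ha)"
  and Ua: "U Fa Ha bea = Comp D ala (sw Ga Fa)"
  and alb: "alb \<in> hom D (prd S Fb Gb) Hb" and beb: "beb \<in> hom D Gb (ex S Fb Hb)"
  and Ub: "U Fb Hb beb = Comp D alb (sw Gb Fb)"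
  and ua: "ua \<in> hom D Y Fa" and ga: "ga \<in> hom D X Ga" and va: "va \<in> hom D Ha Z"
  and ub: "ub \<in> hom D Y Fb" and gb: "gb \<in> hom D X Gb" and vb: "vb \<in> hom D Hb Z"
  shows "(Comp D (Comp D vb alb) (prod_arr D S ub gb) = Comp D (Comp D va ala) (prod_arr D S ua ga))
     \<longleftrightarrow> (Comp D (Comp D (exp_arr D S ub vb) beb) gb = Comp D (Comp D (exp_arr D S ua va) bea) ga)"
proof
  have L: "Comp D (Comp D vb alb) (prod_arr D S ub gb) \<in> hom D (prd S Y X) Z"
    by (rule comp_hom[OF prod_arr_hom[OF ub gb] comp_hom[OF alb vb]])
  have R: "Comp D (Comp D va ala) (prod_arr D S ua ga) \<in> hom D (prd S Y X) Z"
    by (rule comp_hom[OF prod_arr_hom[OF ua ga] comp_hom[OF ala va]])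
  have Lb: "Comp D (Comp D (exp_arr D S ub vb) beb) gb \<in> hom D X (ex S Y Z)"
    by (rule comp_hom[OF gb comp_hom[OF beb exp_arr_hom[OF obb(1,3) ob(2,3) ub vb]]])
  have Rb: "Comp D (Comp D (exp_arr D S ua va) bea) ga \<in> hom D X (ex S Y Z)"
    by (rule comp_hom[OF ga comp_hom[OF bea exp_arr_hom[OF oba(1,3) ob(2,3) ua va]]])
  note tb = transfer[OF obb ob alb beb Ub ub gb vb]
  note ta = transfer[OF oba ob ala bea Ua ua ga va]
  {
    assume "Comp D (Comp D vb alb) (prod_arr D S ub gb) = Comp D (Comp D va ala) (prod_arr D S ua ga)"
    then have "U Y Z (Comp D (Comp D (exp_arr D S ub vb) beb) gb) = U Y Z (Comp D (Comp D (exp_arr D S ua va) bea) ga)"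
      unfolding ta tb by simp
    then show "Comp D (Comp D (exp_arr D S ub vb) beb) gb = Comp D (Comp D (exp_arr D S ua va) bea) ga"
      by (rule U_inj[OF ob Lb Rb])
  }
  {
    assume "Comp D (Comp D (exp_arr D S ub vb) beb) gb = Comp D (Comp D (exp_arr D S ua va) bea) ga"
    then have e: "Comp D (Comp D (Comp D vb alb) (prod_arr D S ub gb)) (sw X Y) = Comp D (Comp D (Comp D va ala) (prod_arr D S ua ga)) (sw X Y)"
      using ta tb by simp
    have s1: "sw X Y \<in> hom D (prd S X Y) (prd S Y X)" by (rule sw_hom[OF ob(1,2)])
    have s2: "sw Y X \<in> hom D (prd S Y X) (prd S X Y)" by (rule sw_hom[OF ob(2,1)])
    have ss: "Comp D (sw X Y) (sw Y X) = Idt D (prd S Y X)" by (rule sw_sw[OF ob(2,1)])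
    have "Comp D (Comp D vb alb) (prod_arr D S ub gb) = Comp D (Comp D (Comp D (Comp D vb alb) (prod_arr D S ub gb)) (sw X Y)) (sw Y X)"
      using assoc[OF s2 s1 L] ss idr[OF L] by simp
    also have "\<dots> = Comp D (Comp D (Comp D (Comp D va ala) (prod_arr D S ua ga)) (sw X Y)) (sw Y X)"
      using e by simp
    also have "\<dots> = Comp D (Comp D va ala) (prod_arr D S ua ga)"
      using assoc[OF s2 s1 R] ss idr[OF R] by simp
    finally show "Comp D (Comp D vb alb) (prod_arr D S ub gb) = Comp D (Comp D va ala) (prod_arr D S ua ga)" .
  }
qed

end

lemma cat_facts: assumes "is_category C" "f \<in> Ar C"
  shows "Dom C f \<in> Ob C" "Cod C f \<in> Ob C"
  using assms unfolding is_category_def by auto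

lemma cat_id: assumes "is_category C" "x \<in> Ob C"
  shows "Idt C x \<in> Ar C" "Dom C (Idt C x) = x" "Cod C (Idt C x) = x"
  using assms unfolding is_category_def hom_def by auto

lemma bf_ob: "is_bifunctor C D B \<Longrightarrow> x' \<in> Ob C \<Longrightarrow> x \<in> Ob C \<Longrightarrow> BFo B x' x \<in> Ob D"
  unfolding is_bifunctor_def by auto

lemma bf_hom: "is_bifunctor C D B \<Longrightarrow> f \<in> Ar C \<Longrightarrow> g \<in> Ar C \<Longrightarrow>
   BFa B f g \<in> hom D (BFo B (Cod C f) (Dom C g)) (BFo B (Dom C f) (Cod C g))"
  unfolding is_bifunctor_def by auto

context ccc begin

lemma main_equiv:
  assumes C: "is_category C" and bF: "is_bifunctor C D F" and bG: "is_bifunctor C D G" and bH: "is_bifunctor C D H"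
  and f: "f \<in> Ar C"
  and R: "\<And>x. x \<in> Ob C \<Longrightarrow> al x \<in> hom D (prd S (BFo F x x) (BFo G x x)) (BFo H x x) \<and>
              be x \<in> hom D (BFo G x x) (ex S (BFo F x x) (BFo H x x)) \<and>
              U (BFo F x x) (BFo H x x) (be x) = Comp D (al x) (sw (BFo G x x) (BFo F x x))"
  shows "(Comp D (Comp D (BFa H f (Idt C (Cod C f))) (al (Cod C f))) (prod_arr D S (BFa F (Idt C (Cod C f)) f) (BFa G (Idt C (Cod C f)) f))
        = Comp D (Comp D (BFa H (Idt C (Dom C f)) f) (al (Dom C f))) (prod_arr D S (BFa F f (Idt C (Dom C f))) (BFa G f (Idt C (Dom C f)))))
    \<longleftrightarrow> (Comp D (Comp D (exp_arr D S (BFa F (Idt C (Cod C f)) f) (BFa H f (Idt C (Cod C f)))) (be (Cod C f))) (BFa G (Idt C (Cod C f)) f)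
        = Comp D (Comp D (exp_arr D S (BFa F f (Idt C (Dom C f))) (BFa H (Idt C (Dom C f)) f)) (be (Dom C f))) (BFa G f (Idt C (Dom C f))))"
proof -
  define a where "a = Dom C f"
  define b where "b = Cod C f"
  have a: "a \<in> Ob C" and b: "b \<in> Ob C" unfolding a_def b_def using cat_facts[OF C f] by auto
  note ia = cat_id[OF C a] and ib = cat_id[OF C b]
  have Ra: "al a \<in> hom D (prd S (BFo F a a) (BFo G a a)) (BFo H a a)"
      "be a \<in> hom D (BFo G a a) (ex S (BFo F a a) (BFo H a a))"
      "U (BFo F a a) (BFo H a a) (be a) = Comp D (al a) (sw (BFo G a a) (BFo F a a))"
    using R[OF a] by auto
  have Rb: "al b \<in> hom D (prd S (BFo F b b) (BFo G b b)) (BFo H b b)"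
      "be b \<in> hom D (BFo G b b) (ex S (BFo F b b) (BFo H b b))"
      "U (BFo F b b) (BFo H b b) (be b) = Comp D (al b) (sw (BFo G b b) (BFo F b b))"
    using R[OF b] by auto
  have ua: "BFa F f (Idt C a) \<in> hom D (BFo F b a) (BFo F a a)"
    using bf_hom[OF bF f ia(1)] ia unfolding a_def b_def by simp
  have ga: "BFa G f (Idt C a) \<in> hom D (BFo G b a) (BFo G a a)"
    using bf_hom[OF bG f ia(1)] ia unfolding a_def b_def by simp
  have va: "BFa H (Idt C a) f \<in> hom D (BFo H a a) (BFo H a b)"
    using bf_hom[OF bH ia(1) f] ia unfolding a_def b_def by simp
  have ub: "BFa F (Idt C b) f \<in> hom D (BFo F b a) (BFo F b b)"
    using bf_hom[OF bF ib(1) f] ib unfolding a_def b_def by simp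
  have gb: "BFa G (Idt C b) f \<in> hom D (BFo G b a) (BFo G b b)"
    using bf_hom[OF bG ib(1) f] ib unfolding a_def b_def by simp
  have vb: "BFa H f (Idt C b) \<in> hom D (BFo H b b) (BFo H a b)"
    using bf_hom[OF bH f ib(1)] ib unfolding a_def b_def by simp
  show ?thesis
    unfolding a_def[symmetric] b_def[symmetric]
    by (rule dinat_equiv[OF bf_ob[OF bF a a] bf_ob[OF bG a a] bf_ob[OF bH a a]
          bf_ob[OF bF b b] bf_ob[OF bG b b] bf_ob[OF bH b b]
          bf_ob[OF bG b a] bf_ob[OF bF b a] bf_ob[OF bH a b] Ra Rb ua ga va ub gb vb])
qed

end

lemma my_bijI: "(\<And>x. x \<in> A \<Longrightarrow> f x \<in> B) \<Longrightarrow> (\<And>y. y \<in> B \<Longrightarrow> g y \<in> A) \<Longrightarrow>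
  (\<And>x. x \<in> A \<Longrightarrow> g (f x) = x) \<Longrightarrow> (\<And>y. y \<in> B \<Longrightarrow> f (g y) = y) \<Longrightarrow> bij_betw f A B"
  by (rule bij_betw_byWitness[where f'=g]) auto

theorem mainTheorem9:
  fixes C :: "('o,'a) category" and D :: "('p,'b) category" and S :: "('p,'b) ccc_structure"
    and F G H :: "('o,'a,'p,'b) bifunctor"
  assumes "is_category C" and "is_ccc D S"
    and "is_bifunctor C D F" and "is_bifunctor C D G" and "is_bifunctor C D H"
  shows "\<exists>\<phi>. bij_betw \<phi> (dinat C D (prod_bifun D S F G) H) (dinat C D G (exp_bifun D S F H))"
proof -
  interpret ccc D S using assms(2) by unfold_locales
  note C = assms(1) and bF = assms(3) and bG = assms(4) and bH = assms(5)
  let ?A = "dinat C D (prod_bifun D S F G) H"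
  let ?B = "dinat C D G (exp_bifun D S F H)"
  have memA: "al \<in> ?A \<longleftrightarrow> (\<forall>x\<in>Ob C. al x \<in> hom D (prd S (BFo F x x) (BFo G x x)) (BFo H x x)) \<and>
      (\<forall>x. x \<notin> Ob C \<longrightarrow> al x = undefined) \<and>
      (\<forall>f\<in>Ar C. Comp D (Comp D (BFa H f (Idt C (Cod C f))) (al (Cod C f))) (prod_arr D S (BFa F (Idt C (Cod C f)) f) (BFa G (Idt C (Cod C f)) f))
        = Comp D (Comp D (BFa H (Idt C (Dom C f)) f) (al (Dom C f))) (prod_arr D S (BFa F f (Idt C (Dom C f))) (BFa G f (Idt C (Dom C f)))))" for al
    unfolding dinat_def prod_bifun_def by simp
  have memB: "be \<in> ?B \<longleftrightarrow> (\<forall>x\<in>Ob C. be x \<in> hom D (BFo G x x) (ex S (BFo F x x) (BFo H x x))) \<and>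
      (\<forall>x. x \<notin> Ob C \<longrightarrow> be x = undefined) \<and>
      (\<forall>f\<in>Ar C. Comp D (Comp D (exp_arr D S (BFa F (Idt C (Cod C f)) f) (BFa H f (Idt C (Cod C f)))) (be (Cod C f))) (BFa G (Idt C (Cod C f)) f)
        = Comp D (Comp D (exp_arr D S (BFa F f (Idt C (Dom C f))) (BFa H (Idt C (Dom C f)) f)) (be (Dom C f))) (BFa G f (Idt C (Dom C f))))" for be
    unfolding dinat_def exp_bifun_def by simp
  define Phi where "Phi al = (\<lambda>x. if x \<in> Ob C then lam S (BFo G x x) (BFo F x x) (BFo H x x)
      (Comp D (al x) (sw (BFo G x x) (BFo F x x))) else undefined)" for al
  define Psi where "Psi be = (\<lambda>x. if x \<in> Ob C then Comp D (U (BFo F x x) (BFo H x x) (be x))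
      (sw (BFo F x x) (BFo G x x)) else undefined)" for be
  have obs: "BFo F x x \<in> Ob D" "BFo G x x \<in> Ob D" "BFo H x x \<in> Ob D" if "x \<in> Ob C" for x
    using bf_ob[OF bF that that] bf_ob[OF bG that that] bf_ob[OF bH that that] by auto
  have RA: "Phi al x \<in> hom D (BFo G x x) (ex S (BFo F x x) (BFo H x x)) \<and>
      U (BFo F x x) (BFo H x x) (Phi al x) = Comp D (al x) (sw (BFo G x x) (BFo F x x))"
    if x: "x \<in> Ob C" and h: "al x \<in> hom D (prd S (BFo F x x) (BFo G x x)) (BFo H x x)" for al x
  proof -
    have hh: "Comp D (al x) (sw (BFo G x x) (BFo F x x)) \<in> hom D (prd S (BFo G x x) (BFo F x x)) (BFo H x x)"
      by (rule comp_hom[OF sw_hom[OF obs(2,1)[OF x]] h])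
    show ?thesis unfolding Phi_def using x lam_hom[OF obs(2,1,3)[OF x] hh] U_lam[OF obs(2,1,3)[OF x] hh] by simp
  qed
  have RB: "Psi be x \<in> hom D (prd S (BFo F x x) (BFo G x x)) (BFo H x x) \<and>
      U (BFo F x x) (BFo H x x) (be x) = Comp D (Psi be x) (sw (BFo G x x) (BFo F x x))"
    if x: "x \<in> Ob C" and h: "be x \<in> hom D (BFo G x x) (ex S (BFo F x x) (BFo H x x))" for be x
  proof -
    have Uh: "U (BFo F x x) (BFo H x x) (be x) \<in> hom D (prd S (BFo G x x) (BFo F x x)) (BFo H x x)"
      by (rule U_hom[OF obs(1,3)[OF x] h])
    have s1: "sw (BFo F x x) (BFo G x x) \<in> hom D (prd S (BFo F x x) (BFo G x x)) (prd S (BFo G x x) (BFo F x x))"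
      by (rule sw_hom[OF obs(1,2)[OF x]])
    have s2: "sw (BFo G x x) (BFo F x x) \<in> hom D (prd S (BFo G x x) (BFo F x x)) (prd S (BFo F x x) (BFo G x x))"
      by (rule sw_hom[OF obs(2,1)[OF x]])
    have "Comp D (Comp D (U (BFo F x x) (BFo H x x) (be x)) (sw (BFo F x x) (BFo G x x))) (sw (BFo G x x) (BFo F x x))
       = U (BFo F x x) (BFo H x x) (be x)"
      using assoc[OF s2 s1 Uh] sw_sw[OF obs(2,1)[OF x]] idr[OF Uh] by simp
    then show ?thesis unfolding Psi_def using x comp_hom[OF s1 Uh] by simp
  qed
  show ?thesis
  proof (rule exI, rule my_bijI[where g = Psi])
    show "Phi al \<in> ?B" if "al \<in> ?A" for al
    proof -
      from that have A: "\<forall>x\<in>Ob C. al x \<in> hom D (prd S (BFo F x x) (BFo G x x)) (BFo H x x)"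
        and E: "\<forall>f\<in>Ar C. Comp D (Comp D (BFa H f (Idt C (Cod C f))) (al (Cod C f))) (prod_arr D S (BFa F (Idt C (Cod C f)) f) (BFa G (Idt C (Cod C f)) f))
        = Comp D (Comp D (BFa H (Idt C (Dom C f)) f) (al (Dom C f))) (prod_arr D S (BFa F f (Idt C (Dom C f))) (BFa G f (Idt C (Dom C f))))"
        unfolding memA by auto
      show "Phi al \<in> ?B" unfolding memB
      proof (intro conjI ballI allI impI)
        show "Phi al x \<in> hom D (BFo G x x) (ex S (BFo F x x) (BFo H x x))" if "x \<in> Ob C" for x
          using RA[where al=al and x=x, OF that] A that by blast
        show "Phi al x = undefined" if "x \<notin> Ob C" for x using that unfolding Phi_def by simp
        fix f assume f: "f \<in> Ar C"
        have R: "al x \<in> hom D (prd S (BFo F x x) (BFo G x x)) (BFo H x x) \<and>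
              Phi al x \<in> hom D (BFo G x x) (ex S (BFo F x x) (BFo H x x)) \<and>
              U (BFo F x x) (BFo H x x) (Phi al x) = Comp D (al x) (sw (BFo G x x) (BFo F x x))" if "x \<in> Ob C" for x
          using RA[where al=al and x=x, OF that] A that by blast
        show "Comp D (Comp D (exp_arr D S (BFa F (Idt C (Cod C f)) f) (BFa H f (Idt C (Cod C f)))) (Phi al (Cod C f))) (BFa G (Idt C (Cod C f)) f)
        = Comp D (Comp D (exp_arr D S (BFa F f (Idt C (Dom C f))) (BFa H (Idt C (Dom C f)) f)) (Phi al (Dom C f))) (BFa G f (Idt C (Dom C f)))"
          using main_equiv[OF C bF bG bH f R] E f by blast
      qed
    qed
    show "Psi be \<in> ?A" if "be \<in> ?B" for be
    proof -
      from that have B: "\<forall>x\<in>Ob C. be x \<in> hom D (BFo G x x) (ex S (BFo F x x) (BFo H x x))"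
        and E: "\<forall>f\<in>Ar C. Comp D (Comp D (exp_arr D S (BFa F (Idt C (Cod C f)) f) (BFa H f (Idt C (Cod C f)))) (be (Cod C f))) (BFa G (Idt C (Cod C f)) f)
        = Comp D (Comp D (exp_arr D S (BFa F f (Idt C (Dom C f))) (BFa H (Idt C (Dom C f)) f)) (be (Dom C f))) (BFa G f (Idt C (Dom C f)))"
        unfolding memB by auto
      show "Psi be \<in> ?A" unfolding memA
      proof (intro conjI ballI allI impI)
        show "Psi be x \<in> hom D (prd S (BFo F x x) (BFo G x x)) (BFo H x x)" if "x \<in> Ob C" for x
          using RB[where be=be and x=x, OF that] B that by blast
        show "Psi be x = undefined" if "x \<notin> Ob C" for x using that unfolding Psi_def by simp
        fix f assume f: "f \<in> Ar C"
        have R: "Psi be x \<in> hom D (prd S (BFo F x x) (BFo G x x)) (BFo H x x) \<and>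
              be x \<in> hom D (BFo G x x) (ex S (BFo F x x) (BFo H x x)) \<and>
              U (BFo F x x) (BFo H x x) (be x) = Comp D (Psi be x) (sw (BFo G x x) (BFo F x x))" if "x \<in> Ob C" for x
          using RB[where be=be and x=x, OF that] B that by blast
        show "Comp D (Comp D (BFa H f (Idt C (Cod C f))) (Psi be (Cod C f))) (prod_arr D S (BFa F (Idt C (Cod C f)) f) (BFa G (Idt C (Cod C f)) f))
        = Comp D (Comp D (BFa H (Idt C (Dom C f)) f) (Psi be (Dom C f))) (prod_arr D S (BFa F f (Idt C (Dom C f))) (BFa G f (Idt C (Dom C f))))"
          using main_equiv[OF C bF bG bH f R] E f by blast
      qed
    qed
    show "Psi (Phi al) = al" if "al \<in> ?A" for al
    proof
      fix x
      show "Psi (Phi al) x = al x"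
      proof (cases "x \<in> Ob C")
        case True
        have h: "al x \<in> hom D (prd S (BFo F x x) (BFo G x x)) (BFo H x x)" using that True unfolding memA by blast
        have s1: "sw (BFo F x x) (BFo G x x) \<in> hom D (prd S (BFo F x x) (BFo G x x)) (prd S (BFo G x x) (BFo F x x))"
          by (rule sw_hom[OF obs(1,2)[OF True]])
        have s2: "sw (BFo G x x) (BFo F x x) \<in> hom D (prd S (BFo G x x) (BFo F x x)) (prd S (BFo F x x) (BFo G x x))"
          by (rule sw_hom[OF obs(2,1)[OF True]])
        have "Psi (Phi al) x = Comp D (Comp D (al x) (sw (BFo G x x) (BFo F x x))) (sw (BFo F x x) (BFo G x x))"
          unfolding Psi_def using True RA[where al=al and x=x, OF True h] by simp
        also have "\<dots> = al x" using assoc[OF s1 s2 h] sw_sw[OF obs(1,2)[OF True]] idr[OF h] by simp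
        finally show ?thesis .
      next
        case False
        then show ?thesis using that unfolding memA Psi_def by simp
      qed
    qed
    show "Phi (Psi be) = be" if "be \<in> ?B" for be
    proof
      fix x
      show "Phi (Psi be) x = be x"
      proof (cases "x \<in> Ob C")
        case True
        have h: "be x \<in> hom D (BFo G x x) (ex S (BFo F x x) (BFo H x x))" using that True unfolding memB by blast
        have hh: "Psi be x \<in> hom D (prd S (BFo F x x) (BFo G x x)) (BFo H x x)" using RB[where be=be and x=x, OF True h] by blast
        have "Phi (Psi be) x = lam S (BFo G x x) (BFo F x x) (BFo H x x) (U (BFo F x x) (BFo H x x) (be x))"
          unfolding Phi_def using True RB[where be=be and x=x, OF True h] by simp
        also have "\<dots> = be x"
          by (rule lam_uniq[OF obs(2,1,3)[OF True] U_hom[OF obs(1,3)[OF True] h] h refl, symmetric])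
        finally show ?thesis .
      next
        case False
        then show ?thesis using that unfolding memB Phi_def by simp
      qed
    qed
  qed
qed

end
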